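(* Let $\frac12<p<1$ and $f:\mathbb{Z}^+\to[0,\infty)$. In the non-uniform frog model with drift on $\mathbb{Z}$ with parameters $p$ and $f$, let $M_0=1$ and, for $j\ge1$, let $M_j$ be the number of frogs originating in $\{0,1,\dots,j-1\}$ that ever hit $x=j$. Then $\{M_j\}_{j\ge0}$ is a discrete-time, time-inhomogeneous Markov process with $M_0=1$, $M_1\sim\mathrm{Bern}\big(\frac{1-p}{p}\big)$, and for $j\ge1$, conditionally on $M_j$, $$M_{j+1}\sim\begin{cases}\mathrm{Bin}\big(M_j,\frac{1-p}{p}\big)+\mathrm{Poiss}\big(\frac{1-p}{p}f(j)\big) & \text{if } M_j\ge1,\\ 0 & \text{if } M_j=0,\end{cases}$$ where the two summands are independent.
   Context: The non-uniform frog model with drift on $\mathbb{Z}$: for each positive integer $j$, the number $\eta_j$ of sleeping frogs initially at site $j$ is Poisson with mean $f(j)$, the $\eta_j$ being independent; there are no sleeping frogs at non-positive sites. There is one active frog at the origin at time $0$. Each active frog performs a random walk on $\mathbb{Z}$ which at each step moves one unit left with probability $p$ and one unit right with probability $1-p$, independently of all other frogs. Whenever an active frog lands on a site containing sleeping frogs, they become active and start their own such walks from that site. *)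

theory Defs
  imports "HOL-Probability.Probability"
begin

definition poiss :: "real \<Rightarrow> nat pmf" where
  "poiss r = (if r = 0 then return_pmf 0 else poisson_pmf r)"

text \<open>Position on Z after n steps of a frog starting at site k whose step
  sequence is s (s m = True means the (m+1)-st step goes left).\<close>
definition frog_pos :: "nat \<Rightarrow> (nat \<Rightarrow> bool) \<Rightarrow> nat \<Rightarrow> int" where
  "frog_pos k s n = int k + (\<Sum>m<n. if s m then -1 else 1)"

definition visits :: "nat \<Rightarrow> (nat \<Rightarrow> bool) \<Rightarrow> int \<Rightarrow> bool" where
  "visits k s x \<longleftrightarrow> (\<exists>n. frog_pos k s n = x)"

text \<open>Configuration: eta j = number of sleeping frogs at site j (j >= 1);
  S (k,i) = step sequence of the i-th frog originating at site k.
  The frog (0,0) is the initially active frog at the origin.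
  woken eta S (k,i): frog (k,i) exists and is eventually activated.\<close>
inductive woken :: "(nat \<Rightarrow> nat) \<Rightarrow> (nat \<times> nat \<Rightarrow> nat \<Rightarrow> bool) \<Rightarrow> nat \<times> nat \<Rightarrow> bool"
  for eta S where
  origin: "woken eta S (0, 0)"
| wake: "woken eta S (k, i) \<Longrightarrow> visits k (S (k, i)) (int l) \<Longrightarrow> 0 < l \<Longrightarrow> i' < eta l
          \<Longrightarrow> woken eta S (l, i')"

definition frog_space :: "real \<Rightarrow> (nat \<Rightarrow> real)
    \<Rightarrow> ((nat \<Rightarrow> nat) \<times> (nat \<times> nat \<Rightarrow> nat \<Rightarrow> bool)) measure" where
  "frog_space p f =
     (PiM UNIV (\<lambda>j. measure_pmf (poiss (if j = 0 then 0 else f j))))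
     \<Otimes>\<^sub>M (PiM UNIV (\<lambda>_. PiM UNIV (\<lambda>_. measure_pmf (bernoulli_pmf p))))"

definition frog_M :: "(nat \<Rightarrow> nat) \<times> (nat \<times> nat \<Rightarrow> nat \<Rightarrow> bool) \<Rightarrow> nat \<Rightarrow> nat" where
  "frog_M \<omega> j = (if j = 0 then 1 else
     card {(k, i). k < j \<and> woken (fst \<omega>) (snd \<omega>) (k, i)
                   \<and> visits k (snd \<omega> (k, i)) (int j)})"

definition markov_chain_nat ::
  "'a measure \<Rightarrow> ('a \<Rightarrow> nat \<Rightarrow> nat) \<Rightarrow> nat pmf \<Rightarrow> (nat \<Rightarrow> nat \<Rightarrow> nat pmf) \<Rightarrow> bool" where
  "markov_chain_nat \<Omega> X init K \<longleftrightarrow>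
     (\<forall>n (m :: nat \<Rightarrow> nat).
        {\<omega> \<in> space \<Omega>. \<forall>i\<le>n. X \<omega> i = m i} \<in> sets \<Omega> \<and>
        measure \<Omega> {\<omega> \<in> space \<Omega>. \<forall>i\<le>n. X \<omega> i = m i}
          = pmf init (m 0) * (\<Prod>i<n. pmf (K i (m i)) (m (Suc i))))"

definition frog_kernel :: "real \<Rightarrow> (nat \<Rightarrow> real) \<Rightarrow> nat \<Rightarrow> nat \<Rightarrow> nat pmf" where
  "frog_kernel p f j m =
     (let q = (1 - p) / p in
      if j = 0 then map_pmf (\<lambda>b. if b then 1 else 0) (bernoulli_pmf q)
      else if m = 0 then return_pmf 0
      else map_pmf (\<lambda>(a, b). a + b) (pair_pmf (binomial_pmf m q) (poiss (q * f j))))"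

end

theory Submission
  imports Defs
begin

definition geomE :: "real \<Rightarrow> enat pmf" where
  "geomE q = map_pmf enat (geometric_pmf (1 - q))"

definition filt :: "enat list \<Rightarrow> enat list" where
  "filt xs = map (\<lambda>r. r - 1) (filter (\<lambda>r. 1 \<le> r) xs)"

definition optr :: "enat \<Rightarrow> enat option" where
  "optr r = (if 1 \<le> r then Some (r - 1) else None)"

lemma enat_lt1: "\<not> 1 \<le> (x::enat) \<longleftrightarrow> x = 0"
  by (cases x) (auto simp: one_enat_def zero_enat_def)

lemma optr_Some_iff: "optr x = Some (enat n) \<longleftrightarrow> x = enat (Suc n)"
  by (cases x) (auto simp: optr_def one_enat_def)

lemma optr_Some_inf: "optr x = Some \<infinity> \<longleftrightarrow> x = \<infinity>"
  by (cases x) (auto simp: optr_def one_enat_def)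

lemma pmf_geomE: "0 < q \<Longrightarrow> q < 1 \<Longrightarrow> pmf (geomE q) (enat n) = q ^ n * (1 - q)"
  unfolding geomE_def by (subst pmf_map_inj') (auto simp: inj_on_def)

lemma pmf_geomE_inf: "pmf (geomE q) \<infinity> = 0"
  unfolding geomE_def by (simp add: pmf_eq_0_set_pmf image_iff)


lemma pmf_bind_bern: "0 \<le> q \<Longrightarrow> q \<le> 1 \<Longrightarrow>
  pmf (bind_pmf (bernoulli_pmf q) g) x = pmf (g True) x * q + pmf (g False) x * (1 - q)"
  by (simp add: pmf_bind)

lemma pmf_map_single: "f -` {x} = {y} \<Longrightarrow> pmf (map_pmf f M) x = pmf M y"
  by (simp add: pmf_map measure_pmf_single)


lemma optr_pre_None: "optr -` {None} = {0}"
  by (rule set_eqI, case_tac x) (auto simp: optr_def one_enat_def zero_enat_def)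
lemma optr_pre_Some: "optr -` {Some (enat n)} = {enat (Suc n)}"
  by (rule set_eqI) (simp add: optr_Some_iff)
lemma optr_pre_inf: "optr -` {Some \<infinity>} = {\<infinity>}"
  by (rule set_eqI) (simp add: optr_Some_inf)

lemma geomE_memoryless:
  assumes q: "0 < q" "q < 1"
  shows "map_pmf optr (geomE q) =
     bind_pmf (bernoulli_pmf q) (\<lambda>b. if b then map_pmf Some (geomE q) else return_pmf None)"
proof (rule pmf_eqI)
  fix x :: "enat option"
  have B: "pmf (bind_pmf (bernoulli_pmf q) (\<lambda>b. if b then map_pmf Some (geomE q) else return_pmf None)) x
     = pmf (map_pmf Some (geomE q)) x * q + pmf (return_pmf None) x * (1 - q)"
    using q by (subst pmf_bind_bern) simp_all
  show "pmf (map_pmf optr (geomE q)) x = pmf (bind_pmf (bernoulli_pmf q) (\<lambda>b. if b then map_pmf Some (geomE q) else return_pmf None)) x"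
  proof (cases x)
    case None
    have "pmf (map_pmf optr (geomE q)) x = pmf (geomE q) (enat 0)"
      unfolding None by (rule pmf_map_single) (simp add: optr_pre_None zero_enat_def)
    also have "\<dots> = 1 - q" using q by (simp add: pmf_geomE)
    finally show ?thesis using B None by (simp add: pmf_eq_0_set_pmf)
  next
    case (Some r)
    have S: "pmf (map_pmf Some (geomE q)) x = pmf (geomE q) r"
      unfolding Some by (rule pmf_map_inj') simp
    show ?thesis
    proof (cases r)
      case (enat n)
      have "pmf (map_pmf optr (geomE q)) x = pmf (geomE q) (enat (Suc n))"
        unfolding Some enat by (rule pmf_map_single) (rule optr_pre_Some)
      also have "\<dots> = q ^ Suc n * (1 - q)" using q by (simp add: pmf_geomE)
      finally show ?thesis using B S Some enat q by (simp add: pmf_geomE)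
    next
      case infinity
      have "pmf (map_pmf optr (geomE q)) x = pmf (geomE q) \<infinity>"
        unfolding Some infinity by (rule pmf_map_single) (rule optr_pre_inf)
      then show ?thesis using B S Some infinity by (simp add: pmf_geomE_inf)
    qed
  qed
qed


definition consopt :: "enat option \<Rightarrow> enat list \<Rightarrow> enat list" where
  "consopt ob ys = (case ob of None \<Rightarrow> ys | Some y \<Rightarrow> y # ys)"

lemma consopt_None[simp]: "consopt None = id" by (auto simp: consopt_def)
lemma consopt_Some[simp]: "consopt (Some y) = Cons y" by (auto simp: consopt_def)

lemma filt_Nil[simp]: "filt [] = []" by (simp add: filt_def)
lemma filt_Cons: "filt (x # xs) = consopt (optr x) (filt xs)"
  by (simp add: filt_def consopt_def optr_def)
lemma filt_append: "filt (xs @ ys) = filt xs @ filt ys" by (simp add: filt_def)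

lemma rep_Suc: "replicate_pmf (Suc n) g = bind_pmf g (\<lambda>x. map_pmf (Cons x) (replicate_pmf n g))"
  by (simp add: map_pmf_def)
declare replicate_pmf.simps(2)[simp del]

lemma filt_rep:
  assumes q: "0 < q" "q < 1"
  shows "map_pmf filt (replicate_pmf n (geomE q)) = bind_pmf (binomial_pmf n q) (\<lambda>k. replicate_pmf k (geomE q))"
proof (induction n)
  case 0
  then show ?case using q by (simp add: binomial_pmf_0 bind_return_pmf)
next
  case (Suc n)
  define g where "g = geomE q"
  define F where "F = map_pmf filt (replicate_pmf n g)"
  have "map_pmf filt (replicate_pmf (Suc n) g) = bind_pmf g (\<lambda>x. map_pmf (consopt (optr x)) F)"
    unfolding rep_Suc F_def map_bind_pmf by (simp add: pmf.map_comp o_def filt_Cons)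
  also have "\<dots> = bind_pmf (map_pmf optr g) (\<lambda>ob. map_pmf (consopt ob) F)"
    by (simp add: bind_map_pmf)
  also have "\<dots> = bind_pmf (bernoulli_pmf q) (\<lambda>b. if b then bind_pmf g (\<lambda>y. map_pmf (Cons y) F) else F)"
    unfolding g_def using q
    by (simp add: geomE_memoryless bind_assoc_pmf)
       (rule bind_pmf_cong, auto simp: bind_map_pmf bind_return_pmf pmf.map_id)
  also have "\<dots> = bind_pmf (bernoulli_pmf q) (\<lambda>b. bind_pmf (binomial_pmf n q)
                     (\<lambda>k. replicate_pmf ((if b then 1 else 0) + k) g))"
  proof (rule bind_pmf_cong[OF refl])
    fix b :: bool
    have IH: "F = bind_pmf (binomial_pmf n q) (\<lambda>k. replicate_pmf k g)"
      using Suc unfolding F_def g_def .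
    show "(if b then bind_pmf g (\<lambda>y. map_pmf (Cons y) F) else F) =
          bind_pmf (binomial_pmf n q) (\<lambda>k. replicate_pmf ((if b then 1 else 0) + k) g)"
    proof (cases b)
      case True
      have "bind_pmf g (\<lambda>y. map_pmf (Cons y) F) =
            bind_pmf g (\<lambda>y. bind_pmf (binomial_pmf n q) (\<lambda>k. map_pmf (Cons y) (replicate_pmf k g)))"
        unfolding IH map_bind_pmf ..
      also have "\<dots> = bind_pmf (binomial_pmf n q) (\<lambda>k. bind_pmf g (\<lambda>y. map_pmf (Cons y) (replicate_pmf k g)))"
        by (rule bind_commute_pmf)
      also have "\<dots> = bind_pmf (binomial_pmf n q) (\<lambda>k. replicate_pmf (Suc k) g)"
        unfolding rep_Suc ..
      finally show ?thesis using True by simp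
    next
      case False
      then show ?thesis using IH by simp
    qed
  qed
  also have "\<dots> = bind_pmf (binomial_pmf (Suc n) q) (\<lambda>k. replicate_pmf k g)"
    using q by (simp add: binomial_pmf_Suc bind_assoc_pmf bind_return_pmf)
  finally show ?case unfolding g_def .
qed


lemma thin_alg: fixes r q e :: real and F a b :: real assumes "F \<noteq> 0" "a \<noteq> 0" "b \<noteq> 0"
  shows "e * (r * q) ^ k / a * ((r * (1 - q)) ^ t / b) =
     r ^ (t + k) / F * e * (F / (a * b) * q ^ k * (1 - q) ^ t)"
  using assms by (simp add: power_add power_mult_distrib)

lemma poisson_thin_sums:
  fixes r q :: real
  shows "(\<lambda>e. r ^ e / fact e * exp (- r) * (real (e choose k) * q ^ k * (1 - q) ^ (e - k)))
           sums ((q * r) ^ k / fact k * exp (- (q * r)))"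
proof -
  define C where "C = exp (- r) * (r * q) ^ k / fact k"
  have "(\<lambda>t. (r * (1 - q)) ^ t / fact t) sums exp (r * (1 - q))"
    using exp_converges[of "r * (1 - q)"] by (simp add: divide_inverse mult.commute)
  then have S: "(\<lambda>t. C * ((r * (1 - q)) ^ t / fact t)) sums (C * exp (r * (1 - q)))"
    by (rule sums_mult)
  have eq: "C * ((r * (1 - q)) ^ t / fact t) =
     r ^ (t + k) / fact (t + k) * exp (- r) * (real ((t + k) choose k) * q ^ k * (1 - q) ^ (t + k - k))" for t
  proof -
    have "real ((t + k) choose k) = fact (t + k) / (fact k * fact t)"
      by (subst binomial_fact) auto
    then show ?thesis unfolding C_def by (simp add: thin_alg power_add power_mult_distrib)
  qed
  have "C * exp (r * (1 - q)) = (q * r) ^ k / fact k * exp (- (q * r))"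
    unfolding C_def by (simp add: mult_exp_exp algebra_simps)
  then have "(\<lambda>t. r ^ (t + k) / fact (t + k) * exp (- r) * (real ((t + k) choose k) * q ^ k * (1 - q) ^ (t + k - k)))
      sums ((q * r) ^ k / fact k * exp (- (q * r)))"
    using S unfolding eq by simp
  then show ?thesis
    by (subst (asm) sums_zero_iff_shift[where n=k]) simp_all
qed


lemma poisson_thin:
  assumes r: "r > 0" and q: "0 < q" "q < 1"
  shows "bind_pmf (poisson_pmf r) (\<lambda>e. binomial_pmf e q) = poisson_pmf (q * r)"
proof (rule pmf_eqI)
  fix k
  have qr: "q * r > 0" using q r by simp
  have "ennreal (pmf (bind_pmf (poisson_pmf r) (\<lambda>e. binomial_pmf e q)) k) =
        (\<integral>\<^sup>+e. ennreal (pmf (poisson_pmf r) e) * ennreal (pmf (binomial_pmf e q) k) \<partial>count_space UNIV)"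
    by (simp add: ennreal_pmf_bind nn_integral_measure_pmf)
  also have "\<dots> = (\<Sum>e. ennreal (r ^ e / fact e * exp (- r) * (real (e choose k) * q ^ k * (1 - q) ^ (e - k))))"
    using r q by (simp add: nn_integral_count_space_nat ennreal_mult'[symmetric])
  also have "\<dots> = ennreal ((q * r) ^ k / fact k * exp (- (q * r)))"
    using r q by (intro suminf_ennreal_eq poisson_thin_sums) auto
  also have "\<dots> = ennreal (pmf (poisson_pmf (q * r)) k)"
    using qr by simp
  finally show "pmf (bind_pmf (poisson_pmf r) (\<lambda>e. binomial_pmf e q)) k = pmf (poisson_pmf (q * r)) k"
    by (simp add: pmf_nonneg)
qed


definition qq :: "real \<Rightarrow> real" where "qq p = (1 - p) / p"

lemma qq_bounds: "1/2 < p \<Longrightarrow> p < 1 \<Longrightarrow> 0 < qq p \<and> qq p < 1"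
  by (auto simp: qq_def field_simps)

definition locfull :: "real \<Rightarrow> (nat \<Rightarrow> real) \<Rightarrow> nat \<Rightarrow> enat list pmf" where
  "locfull p f j = (if j = 0 then return_pmf [] else
     bind_pmf (poiss (f j)) (\<lambda>e. replicate_pmf e (geomE (qq p))))"

definition stepR :: "nat \<Rightarrow> enat list \<Rightarrow> enat list \<Rightarrow> enat list" where
  "stepR j R L = filt R @ (if 0 < j \<and> R \<noteq> [] then filt L else [])"

lemma stepR_Nil: "stepR j [] = (\<lambda>_. [])" by (auto simp: stepR_def)

lemma poiss_thin:
  assumes r: "r \<ge> 0" and q: "0 < q" "q < 1"
  shows "bind_pmf (poiss r) (\<lambda>e. binomial_pmf e q) = poiss (q * r)"
proof (cases "r = 0")
  case True
  then show ?thesis using q by (simp add: poiss_def bind_return_pmf binomial_pmf_0)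
next
  case False
  then show ?thesis using r q by (simp add: poiss_def poisson_thin)
qed

lemma loc_filt:
  assumes p: "1/2 < p" "p < 1" and j: "j > 0" and f: "f j \<ge> 0"
  shows "map_pmf filt (locfull p f j) = bind_pmf (poiss (qq p * f j)) (\<lambda>k. replicate_pmf k (geomE (qq p)))"
proof -
  have q: "0 < qq p" "qq p < 1" using qq_bounds[OF p] by auto
  have "map_pmf filt (locfull p f j) =
        bind_pmf (poiss (f j)) (\<lambda>e. map_pmf filt (replicate_pmf e (geomE (qq p))))"
    using j by (simp add: locfull_def map_bind_pmf)
  also have "\<dots> = bind_pmf (poiss (f j)) (\<lambda>e. bind_pmf (binomial_pmf e (qq p)) (\<lambda>k. replicate_pmf k (geomE (qq p))))"
    using q by (simp add: filt_rep)
  also have "\<dots> = bind_pmf (bind_pmf (poiss (f j)) (\<lambda>e. binomial_pmf e (qq p))) (\<lambda>k. replicate_pmf k (geomE (qq p)))"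
    by (simp add: bind_assoc_pmf)
  also have "\<dots> = bind_pmf (poiss (qq p * f j)) (\<lambda>k. replicate_pmf k (geomE (qq p)))"
    using q f by (simp add: poiss_thin)
  finally show ?thesis .
qed

lemma one_step:
  assumes p: "1/2 < p" "p < 1" and f: "j > 0 \<Longrightarrow> f j \<ge> 0" and jc: "j > 0 \<or> c = 1"
  shows "bind_pmf (replicate_pmf c (geomE (qq p))) (\<lambda>R. map_pmf (stepR j R) (locfull p f j))
       = bind_pmf (frog_kernel p f j c) (\<lambda>c'. replicate_pmf c' (geomE (qq p)))"
proof -
  define q where "q = qq p"
  define g where "g = geomE q"
  have q: "0 < q" "q < 1" using qq_bounds[OF p] by (auto simp: q_def)
  have K: "frog_kernel p f j c = (if j = 0 then map_pmf (\<lambda>b. if b then 1 else 0) (bernoulli_pmf q)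
      else if c = 0 then return_pmf 0
      else map_pmf (\<lambda>(a, b). a + b) (pair_pmf (binomial_pmf c q) (poiss (q * f j))))"
    by (simp add: frog_kernel_def q_def qq_def Let_def)
  show ?thesis
  proof (cases "j = 0")
    case True
    then have c: "c = 1" using jc by simp
    have "bind_pmf (replicate_pmf c g) (\<lambda>R. map_pmf (stepR j R) (locfull p f j)) =
          map_pmf filt (replicate_pmf 1 g)"
      using True c by (simp add: locfull_def stepR_def map_pmf_def)
    also have "\<dots> = bind_pmf (binomial_pmf 1 q) (\<lambda>k. replicate_pmf k g)"
      unfolding g_def using q by (rule filt_rep)
    also have "binomial_pmf 1 q = map_pmf (\<lambda>b. if b then 1 else 0) (bernoulli_pmf q)"
      using q by (simp add: binomial_pmf_Suc binomial_pmf_0 bind_return_pmf map_pmf_def)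
    finally show ?thesis using K True by (simp add: g_def q_def)
  next
    case False
    show ?thesis
    proof (cases "c = 0")
      case True
      then show ?thesis using K False by (simp add: bind_return_pmf stepR_Nil map_pmf_const)
    next
      case c: False
      have "bind_pmf (replicate_pmf c g) (\<lambda>R. map_pmf (stepR j R) (locfull p f j)) =
            bind_pmf (replicate_pmf c g) (\<lambda>R. bind_pmf (locfull p f j) (\<lambda>L. return_pmf (filt R @ filt L)))"
      proof (rule bind_pmf_cong[OF refl])
        fix R assume "R \<in> set_pmf (replicate_pmf c g)"
        then have "R \<noteq> []" using c by (auto simp: set_replicate_pmf)
        then show "map_pmf (stepR j R) (locfull p f j) = bind_pmf (locfull p f j) (\<lambda>L. return_pmf (filt R @ filt L))"
          using False by (simp add: stepR_def map_pmf_def)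
      qed
      also have "\<dots> = bind_pmf (map_pmf filt (replicate_pmf c g)) (\<lambda>A. bind_pmf (map_pmf filt (locfull p f j)) (\<lambda>B. return_pmf (A @ B)))"
        by (simp add: bind_map_pmf)
      also have "\<dots> = bind_pmf (bind_pmf (binomial_pmf c q) (\<lambda>k. replicate_pmf k g))
           (\<lambda>A. bind_pmf (bind_pmf (poiss (q * f j)) (\<lambda>k. replicate_pmf k g)) (\<lambda>B. return_pmf (A @ B)))"
        using q p False f unfolding g_def q_def by (simp add: filt_rep loc_filt)
      also have "\<dots> = bind_pmf (binomial_pmf c q) (\<lambda>a. bind_pmf (poiss (q * f j)) (\<lambda>b.
           bind_pmf (replicate_pmf a g) (\<lambda>A. bind_pmf (replicate_pmf b g) (\<lambda>B. return_pmf (A @ B)))))"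
        by (simp add: bind_assoc_pmf bind_commute_pmf[of "replicate_pmf _ g" "poiss (q * f j)"])
      also have "\<dots> = bind_pmf (binomial_pmf c q) (\<lambda>a. bind_pmf (poiss (q * f j)) (\<lambda>b. replicate_pmf (a + b) g))"
        by (simp add: replicate_pmf_distrib)
      also have "\<dots> = bind_pmf (map_pmf (\<lambda>(a, b). a + b) (pair_pmf (binomial_pmf c q) (poiss (q * f j))))
                          (\<lambda>c'. replicate_pmf c' g)"
        by (simp add: pair_pmf_def bind_map_pmf bind_assoc_pmf bind_return_pmf)
      finally show ?thesis using K False c by (simp add: g_def q_def)
    qed
  qed
qed


primrec locsfrom :: "real \<Rightarrow> (nat \<Rightarrow> real) \<Rightarrow> nat \<Rightarrow> nat \<Rightarrow> enat list list pmf" where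
  "locsfrom p f j 0 = return_pmf []"
| "locsfrom p f j (Suc n) = map_pmf (\<lambda>(L, ls). L # ls) (pair_pmf (locfull p f j) (locsfrom p f (Suc j) n))"

primrec lens :: "nat \<Rightarrow> enat list \<Rightarrow> enat list list \<Rightarrow> nat list" where
  "lens j R [] = [length R]"
| "lens j R (L # ls) = length R # lens (Suc j) (stepR j R L) ls"

primrec chainpmf :: "real \<Rightarrow> (nat \<Rightarrow> real) \<Rightarrow> nat \<Rightarrow> nat \<Rightarrow> nat \<Rightarrow> nat list pmf" where
  "chainpmf p f j c 0 = return_pmf [c]"
| "chainpmf p f j c (Suc n) = bind_pmf (frog_kernel p f j c) (\<lambda>c'. map_pmf (Cons c) (chainpmf p f (Suc j) c' n))"

lemma chain_lemma:
  assumes p: "1/2 < p" "p < 1" and f: "\<forall>j>0. f j \<ge> 0"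
  shows "j > 0 \<or> c = 1 \<Longrightarrow> bind_pmf (replicate_pmf c (geomE (qq p))) (\<lambda>R. map_pmf (lens j R) (locsfrom p f j n))
     = chainpmf p f j c n"
proof (induction n arbitrary: j c)
  case 0
  have "bind_pmf (replicate_pmf c (geomE (qq p))) (\<lambda>R. map_pmf (lens j R) (locsfrom p f j 0))
      = bind_pmf (replicate_pmf c (geomE (qq p))) (\<lambda>R. return_pmf [c])"
    by (rule bind_pmf_cong) (auto simp: set_replicate_pmf)
  then show ?case by simp
next
  case (Suc n)
  define g where "g = geomE (qq p)"
  have "bind_pmf (replicate_pmf c g) (\<lambda>R. map_pmf (lens j R) (locsfrom p f j (Suc n)))
     = bind_pmf (replicate_pmf c g) (\<lambda>R. bind_pmf (locfull p f j) (\<lambda>L.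
          map_pmf (\<lambda>ls. c # lens (Suc j) (stepR j R L) ls) (locsfrom p f (Suc j) n)))"
  proof (rule bind_pmf_cong[OF refl])
    fix R assume "R \<in> set_pmf (replicate_pmf c g)"
    then have "length R = c" by (auto simp: set_replicate_pmf)
    then show "map_pmf (lens j R) (locsfrom p f j (Suc n)) = bind_pmf (locfull p f j) (\<lambda>L.
          map_pmf (\<lambda>ls. c # lens (Suc j) (stepR j R L) ls) (locsfrom p f (Suc j) n))"
      by (simp add: pair_pmf_def map_bind_pmf map_pmf_def bind_assoc_pmf bind_return_pmf)
  qed
  also have "\<dots> = map_pmf (Cons c) (bind_pmf (bind_pmf (replicate_pmf c g) (\<lambda>R. map_pmf (stepR j R) (locfull p f j)))
          (\<lambda>R'. map_pmf (lens (Suc j) R') (locsfrom p f (Suc j) n)))"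
    by (simp add: map_bind_pmf bind_assoc_pmf bind_map_pmf pmf.map_comp o_def)
  also have "\<dots> = map_pmf (Cons c) (bind_pmf (bind_pmf (frog_kernel p f j c) (\<lambda>c'. replicate_pmf c' g))
          (\<lambda>R'. map_pmf (lens (Suc j) R') (locsfrom p f (Suc j) n)))"
    using one_step[OF p, of j f c] f Suc.prems unfolding g_def by simp
  also have "\<dots> = map_pmf (Cons c) (bind_pmf (frog_kernel p f j c) (\<lambda>c'. chainpmf p f (Suc j) c' n))"
    unfolding bind_assoc_pmf g_def using Suc.IH[of "Suc j"] by simp
  also have "\<dots> = chainpmf p f j c (Suc n)"
    by (simp add: map_bind_pmf)
  finally show ?case unfolding g_def .
qed

lemma pmf_chainpmf:
  "pmf (chainpmf p f j c n) (map m [0..<Suc n]) =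
     (if m 0 = c then 1 else 0) * (\<Prod>i<n. pmf (frog_kernel p f (j + i) (m i)) (m (Suc i)))"
proof (induction n arbitrary: j c m)
  case 0
  then show ?case by (simp add: indicator_def)
next
  case (Suc n)
  have L: "map m [0..<Suc (Suc n)] = m 0 # map (\<lambda>i. m (Suc i)) [0..<Suc n]"
    by (simp add: map_upt_Suc del: upt_Suc)
  have P: "pmf (map_pmf (Cons c) M) (m 0 # xs) = (if m 0 = c then pmf M xs else 0)" for M xs
  proof (cases "m 0 = c")
    case True
    then show ?thesis by (simp add: pmf_map_inj')
  next
    case False
    then have "Cons c -` {m 0 # xs} = {}" by auto
    then show ?thesis using False by (simp add: pmf_map)
  qed
  have "pmf (chainpmf p f j c (Suc n)) (map m [0..<Suc (Suc n)]) =
    (\<integral>c'. (if m 0 = c then pmf (chainpmf p f (Suc j) c' n) (map (\<lambda>i. m (Suc i)) [0..<Suc n]) else 0)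
        \<partial>measure_pmf (frog_kernel p f j c))"
    unfolding L by (simp add: pmf_bind P del: upt_Suc)
  also have "\<dots> = (\<integral>c'. (if m 0 = c then 1 else 0) * (indicator {m 1} c' *
        (\<Prod>i<n. pmf (frog_kernel p f (Suc j + i) (m (Suc i))) (m (Suc (Suc i))))) \<partial>measure_pmf (frog_kernel p f j c))"
    using Suc.IH[of "Suc j" _ "\<lambda>i. m (Suc i)"] by (intro Bochner_Integration.integral_cong) (auto simp: indicator_def simp del: upt_Suc)
  also have "\<dots> = (if m 0 = c then 1 else 0) * (pmf (frog_kernel p f j c) (m 1) *
        (\<Prod>i<n. pmf (frog_kernel p f (Suc j + i) (m (Suc i))) (m (Suc (Suc i)))))"
    by (simp add: measure_pmf_single)
  also have "\<dots> = (if m 0 = c then 1 else 0) * (\<Prod>i<Suc n. pmf (frog_kernel p f (j + i) (m i)) (m (Suc i)))"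
    by (cases "m 0 = c") (simp_all add: prod.lessThan_Suc_shift del: prod.lessThan_Suc)
  finally show ?case .
qed


definition st :: "bool \<Rightarrow> int" where "st b = (if b then -1 else 1)"
definition wsum :: "bool stream \<Rightarrow> nat \<Rightarrow> int" where "wsum \<omega> n = (\<Sum>m<n. st (\<omega> !! m))"
definition Hit :: "int \<Rightarrow> bool stream \<Rightarrow> bool" where "Hit x \<omega> \<longleftrightarrow> (\<exists>n. x + wsum \<omega> n = 0)"
definition HitN :: "nat \<Rightarrow> int \<Rightarrow> bool stream \<Rightarrow> bool" where "HitN N x \<omega> \<longleftrightarrow> (\<exists>n\<le>N. x + wsum \<omega> n = 0)"

abbreviation SB :: "real \<Rightarrow> bool stream measure" where
  "SB p \<equiv> stream_space (measure_pmf (bernoulli_pmf p))"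

lemma wsum_0[simp]: "wsum \<omega> 0 = 0" by (simp add: wsum_def)
lemma wsum_Stream: "wsum (t ## \<omega>) (Suc n) = st t + wsum \<omega> n"
  by (simp add: wsum_def sum.lessThan_Suc_shift del: sum.lessThan_Suc)

lemma Hit_Stream: "x \<noteq> 0 \<Longrightarrow> Hit x (t ## \<omega>) \<longleftrightarrow> Hit (x + st t) \<omega>"
proof
  assume "x \<noteq> 0" "Hit x (t ## \<omega>)"
  then obtain n where n: "x + wsum (t ## \<omega>) n = 0" by (auto simp: Hit_def)
  with \<open>x \<noteq> 0\<close> obtain n' where "n = Suc n'" by (cases n) auto
  with n show "Hit (x + st t) \<omega>" by (auto simp: Hit_def wsum_Stream algebra_simps)
next
  assume "Hit (x + st t) \<omega>"
  then obtain n where n: "x + st t + wsum \<omega> n = 0" by (auto simp: Hit_def)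
  then have "x + wsum (t ## \<omega>) (Suc n) = 0" by (simp add: wsum_Stream algebra_simps)
  then show "Hit x (t ## \<omega>)" by (auto simp: Hit_def)
qed

lemma HitN_Stream: "x \<noteq> 0 \<Longrightarrow> HitN (Suc N) x (t ## \<omega>) \<longleftrightarrow> HitN N (x + st t) \<omega>"
proof
  assume "x \<noteq> 0" "HitN (Suc N) x (t ## \<omega>)"
  then obtain n where n: "n \<le> Suc N" "x + wsum (t ## \<omega>) n = 0" by (auto simp: HitN_def)
  with \<open>x \<noteq> 0\<close> obtain n' where "n = Suc n'" by (cases n) auto
  with n show "HitN N (x + st t) \<omega>" by (auto simp: HitN_def wsum_Stream algebra_simps)
next
  assume "HitN N (x + st t) \<omega>"
  then obtain n where n: "n \<le> N" "x + st t + wsum \<omega> n = 0" by (auto simp: HitN_def)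
  then have "x + wsum (t ## \<omega>) (Suc n) = 0" by (simp add: wsum_Stream algebra_simps)
  then show "HitN (Suc N) x (t ## \<omega>)" using n by (auto simp: HitN_def)
qed

lemma HitN_0: "HitN 0 x \<omega> \<longleftrightarrow> x = 0" by (simp add: HitN_def)
lemma Hit_zero: "Hit 0 \<omega>" by (auto simp: Hit_def intro: exI[of _ 0])
lemma HitN_zero: "HitN N 0 \<omega>" by (auto simp: HitN_def intro: exI[of _ 0])

lemma Hit_UN: "{\<omega>. Hit x \<omega>} = (\<Union>N. {\<omega>. HitN N x \<omega>})"
  by (auto simp: Hit_def HitN_def)

lemma wsum_stake: "wsum \<omega> n = sum_list (map st (stake n \<omega>))"
  by (simp add: wsum_def sum_list_sum_nth atLeast0LessThan)

lemma meas_stake_pred: "Measurable.pred (SB p) (\<lambda>\<omega>. P (stake n \<omega>))"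
proof -
  have "(\<lambda>\<omega>. P (stake n \<omega>)) \<in> measurable (stream_space (count_space UNIV)) (count_space UNIV)"
    by (rule measurable_compose[OF measurable_stake]) simp
  moreover have "sets (SB p) = sets (stream_space (count_space UNIV))"
    by (rule sets_stream_space_cong) simp
  ultimately show ?thesis by (simp cong: measurable_cong_sets)
qed

lemma meas_HitN[measurable]: "Measurable.pred (SB p) (HitN N x)"
  unfolding HitN_def wsum_stake by (intro pred_intros_countable meas_stake_pred)
lemma meas_Hit[measurable]: "Measurable.pred (SB p) (Hit x)"
  unfolding Hit_def wsum_stake by (intro pred_intros_countable meas_stake_pred)


lemma prob_step:
  assumes p: "0 \<le> p" "p \<le> 1" and Q[measurable]: "Measurable.pred (SB p) Q"
  shows "\<P>(\<omega> in SB p. Q \<omega>) = \<P>(\<omega> in SB p. Q (True ## \<omega>)) * p + \<P>(\<omega> in SB p. Q (False ## \<omega>)) * (1 - p)"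
proof -
  have "ennreal (\<P>(\<omega> in SB p. Q \<omega>)) = (\<integral>\<^sup>+t. ennreal (\<P>(\<omega> in SB p. Q (t ## \<omega>))) \<partial>measure_pmf (bernoulli_pmf p))"
    by (rule prob_space.prob_stream_space[OF prob_space_measure_pmf]) measurable
  also have "\<dots> = ennreal (\<P>(\<omega> in SB p. Q (True ## \<omega>)) * p + \<P>(\<omega> in SB p. Q (False ## \<omega>)) * (1 - p))"
    using p by (simp add: ennreal_plus ennreal_mult)
  finally show ?thesis
    using p by (subst (asm) ennreal_inj) (auto intro!: add_nonneg_nonneg mult_nonneg_nonneg)
qed


lemma rec_sol:
  fixes a :: "nat \<Rightarrow> real" and p q :: real
  assumes p: "0 < p" "p < 1" and qdef: "q = (1 - p) / p" and q: "0 < q" "q < 1"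
    and a0: "a 0 = 1" and rec: "\<And>k. k \<ge> 1 \<Longrightarrow> a k = p * a (Suc k) + (1 - p) * a (k - 1)"
    and bnd: "\<And>k. 0 \<le> a k \<and> a k \<le> q ^ k"
  shows "a k = q ^ k"
proof -
  define b where "b k = a k - q ^ k" for k
  have qrec: "q ^ k = p * q ^ Suc k + (1 - p) * q ^ (k - 1)" if k1: "k \<ge> 1" for k
  proof -
    obtain k' where k: "k = Suc k'" using k1 by (cases k) auto
    have "p * q * q + (1 - p) = q" using p unfolding qdef by (simp add: field_simps)
    then have "q ^ k' * (p * q * q + (1 - p)) = q ^ k' * q" by simp
    then show ?thesis unfolding k by (simp add: algebra_simps)
  qed
  have brec: "b k = p * b (Suc k) + (1 - p) * b (k - 1)" if "k \<ge> 1" for k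
    using rec[OF that] qrec[OF that] unfolding b_def by (simp add: algebra_simps)
  define d where "d k = b (Suc k) - b k" for k
  have drec: "d k = q * d (k - 1)" if "k \<ge> 1" for k
  proof -
    have "p * d k = (1 - p) * d (k - 1)"
      using brec[OF that] that unfolding d_def by (cases k) (auto simp: algebra_simps)
    then show ?thesis using p unfolding qdef by (simp add: field_simps)
  qed
  have dk: "d k = q ^ k * d 0" for k
  proof (induction k)
    case (Suc k)
    then show ?case using drec[of "Suc k"] by simp
  qed simp
  have b0: "b 0 = 0" using a0 unfolding b_def by simp
  have bsum: "b k = d 0 * (\<Sum>i<k. q ^ i)" for k
  proof (induction k)
    case 0
    then show ?case using b0 by simp
  next
    case (Suc k)
    have "b (Suc k) = b k + d k" unfolding d_def by simp
    then show ?case using Suc dk[of k] by (simp add: algebra_simps)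
  qed
  have d0: "d 0 = 0"
  proof (rule ccontr)
    assume ne: "d 0 \<noteq> 0"
    have "d 0 = b 1" using b0 unfolding d_def by simp
    also have "b 1 \<le> 0" using bnd[of 1] unfolding b_def by simp
    finally have "d 0 \<le> 0" .
    then have neg: "d 0 < 0" using ne by linarith
    obtain k where k: "q ^ k < - d 0" using real_arch_pow_inv[of "- d 0" q] neg q by auto
    have S1: "(\<Sum>i<Suc k. q ^ i) = 1 + (\<Sum>i<k. q ^ Suc i)"
      by (subst sum.lessThan_Suc_shift) simp
    have S2: "(\<Sum>i<k. q ^ Suc i) \<ge> 0" using q by (intro sum_nonneg) simp
    have S: "(\<Sum>i<Suc k. q ^ i) \<ge> 1" using S1 S2 by linarith
    have "d 0 * (\<Sum>i<Suc k. q ^ i) \<le> d 0 * 1"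
      using neg S by (intro mult_left_mono_neg) auto
    then have "b (Suc k) \<le> d 0" using bsum[of "Suc k"] by simp
    moreover have "b (Suc k) \<ge> -(q ^ Suc k)" using bnd[of "Suc k"] unfolding b_def by simp
    moreover have "q ^ Suc k \<le> q ^ k" using q by (simp add: power_decreasing)
    ultimately show False using k by linarith
  qed
  show ?thesis using bsum[of k] d0 unfolding b_def by simp
qed


locale walkp =
  fixes p :: real
  assumes p_gt: "1/2 < p" and p_lt: "p < 1"
begin

definition q where "q = (1 - p) / p"

lemma q_pos: "0 < q" and q_lt: "q < 1" using p_gt p_lt by (auto simp: q_def field_simps)
lemma p01: "0 \<le> p" "p \<le> 1" using p_gt p_lt by auto

lemma SB_prob: "prob_space (SB p)"
  by (rule prob_space.prob_space_stream_space[OF prob_space_measure_pmf])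

lemma hN_step: "x \<noteq> 0 \<Longrightarrow> \<P>(\<omega> in SB p. HitN (Suc N) x \<omega>) =
    \<P>(\<omega> in SB p. HitN N (x - 1) \<omega>) * p + \<P>(\<omega> in SB p. HitN N (x + 1) \<omega>) * (1 - p)"
  using prob_step[OF p01, of "HitN (Suc N) x"] by (simp add: HitN_Stream st_def)

lemma h_step: "x \<noteq> 0 \<Longrightarrow> \<P>(\<omega> in SB p. Hit x \<omega>) =
    \<P>(\<omega> in SB p. Hit (x - 1) \<omega>) * p + \<P>(\<omega> in SB p. Hit (x + 1) \<omega>) * (1 - p)"
  using prob_step[OF p01, of "Hit x"] by (simp add: Hit_Stream st_def)

lemma prob_le1: "\<P>(\<omega> in SB p. P \<omega>) \<le> 1"
  using prob_space.prob_le_1[OF SB_prob] by simp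

lemma qalg: "q ^ Suc k * p + q ^ k' * (1 - p) = q ^ Suc k'" if "k = Suc k'" for k k'
proof -
  have "p * q * q + (1 - p) = q" using p_gt p_lt unfolding q_def by (simp add: field_simps)
  then have "q ^ k' * (p * q * q + (1 - p)) = q ^ k' * q" by simp
  then show ?thesis unfolding that by (simp add: algebra_simps)
qed

lemma hN_bound: "x \<le> 0 \<Longrightarrow> \<P>(\<omega> in SB p. HitN N x \<omega>) \<le> q ^ nat (- x)"
proof (induction N arbitrary: x)
  case 0
  show ?case
  proof (cases "x = 0")
    case True then show ?thesis using prob_le1 by simp
  next
    case False then show ?thesis using q_pos by (simp add: HitN_0)
  qed
next
  case (Suc N)
  show ?case
  proof (cases "x = 0")
    case True then show ?thesis using prob_le1 by simp
  next
    case False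
    then have x: "x < 0" using Suc.prems by simp
    define k' where "k' = nat (- x) - 1"
    have k: "nat (- x) = Suc k'" using x unfolding k'_def by simp
    have "\<P>(\<omega> in SB p. HitN (Suc N) x \<omega>) =
      \<P>(\<omega> in SB p. HitN N (x - 1) \<omega>) * p + \<P>(\<omega> in SB p. HitN N (x + 1) \<omega>) * (1 - p)"
      using False by (rule hN_step)
    also have "\<dots> \<le> q ^ Suc (nat (- x)) * p + q ^ k' * (1 - p)"
    proof (intro add_mono mult_right_mono)
      have "nat (- (x - 1)) = Suc (nat (- x))" using x by simp
      then show "\<P>(\<omega> in SB p. HitN N (x - 1) \<omega>) \<le> q ^ Suc (nat (- x))"
        using Suc.IH[of "x - 1"] x by simp
      have "nat (- (x + 1)) = k'" using x k by simp
      then show "\<P>(\<omega> in SB p. HitN N (x + 1) \<omega>) \<le> q ^ k'"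
        using Suc.IH[of "x + 1"] x by simp
    qed (use p01 in auto)
    also have "\<dots> = q ^ nat (- x)" using qalg[OF k] k by simp
    finally show ?thesis .
  qed
qed

lemma h_bound: assumes "x \<le> 0" shows "\<P>(\<omega> in SB p. Hit x \<omega>) \<le> q ^ nat (- x)"
proof -
  interpret P: prob_space "SB p" by (rule SB_prob)
  define A where "A N = {\<omega> \<in> space (SB p). HitN N x \<omega>}" for N
  have U: "(\<Union>N. A N) = {\<omega> \<in> space (SB p). Hit x \<omega>}" unfolding A_def by (auto simp: Hit_def HitN_def)
  have "(\<lambda>N. measure (SB p) (A N)) \<longlonglongrightarrow> measure (SB p) (\<Union>N. A N)"
  proof (rule P.finite_Lim_measure_incseq)
    show "range A \<subseteq> sets (SB p)" unfolding A_def by (intro image_subsetI) measurable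
    show "incseq A" unfolding A_def incseq_def HitN_def by (auto intro: order_trans)
  qed
  then have "measure (SB p) (\<Union>N. A N) \<le> q ^ nat (- x)"
    by (rule LIMSEQ_le_const2) (auto simp: A_def intro!: exI[of _ 0] hN_bound assms)
  then show ?thesis unfolding U .
qed

lemma hit_prob: "\<P>(\<omega> in SB p. Hit (- int k) \<omega>) = q ^ k"
proof -
  interpret P: prob_space "SB p" by (rule SB_prob)
  define a where "a k = \<P>(\<omega> in SB p. Hit (- int k) \<omega>)" for k
  have "a k = q ^ k"
  proof (rule rec_sol[where p=p and q=q])
    show "0 < p" "p < 1" using p01 p_gt p_lt by auto
    show "q = (1 - p) / p" by (simp add: q_def)
    show "0 < q" "q < 1" by (rule q_pos, rule q_lt)
    show "a 0 = 1" unfolding a_def by (simp add: Hit_zero P.prob_space)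
    fix k :: nat
    show "0 \<le> a k \<and> a k \<le> q ^ k" unfolding a_def using h_bound[of "- int k"] by simp
    assume "k \<ge> 1"
    then have "- int k \<noteq> 0" by simp
    note H = h_step[OF this]
    have e1: "- int k - 1 = - int (Suc k)" by simp
    have e2: "- int k + 1 = - int (k - 1)" using \<open>k \<ge> 1\<close> by simp
    show "a k = p * a (Suc k) + (1 - p) * a (k - 1)"
      unfolding a_def using H unfolding e1 e2 by (simp only: mult.commute)
  qed
  then show ?thesis unfolding a_def .
qed

end


abbreviation Bp :: "real \<Rightarrow> (nat \<Rightarrow> bool) measure" where
  "Bp p \<equiv> PiM UNIV (\<lambda>_::nat. measure_pmf (bernoulli_pmf p))"

lemma frog_pos_0[simp]: "frog_pos k s 0 = int k" by (simp add: frog_pos_def)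
lemma frog_pos_Suc: "frog_pos k s (Suc n) = frog_pos k s n + (if s n then -1 else 1)"
  by (simp add: frog_pos_def)
lemma frog_pos_shift: "frog_pos k s n = int k + frog_pos 0 s n"
  by (simp add: frog_pos_def)

lemma frog_ivt: "int k \<le> z \<Longrightarrow> z \<le> frog_pos k s n \<Longrightarrow> \<exists>m\<le>n. frog_pos k s m = z"
proof (induction n)
  case 0 then show ?case by auto
next
  case (Suc n)
  show ?case
  proof (cases "z \<le> frog_pos k s n")
    case True then show ?thesis using Suc by (meson le_SucI)
  next
    case False
    then have "frog_pos k s (Suc n) = z" using Suc.prems by (auto simp: frog_pos_Suc split: if_splits)
    then show ?thesis by blast
  qed
qed

lemma visits_ivt: "visits k s y \<Longrightarrow> int k \<le> z \<Longrightarrow> z \<le> y \<Longrightarrow> visits k s z"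
  unfolding visits_def using frog_ivt by metis

lemma visits_shift: assumes "k \<le> j" shows "visits k s (int j) \<longleftrightarrow> visits 0 s (int (j - k))"
proof -
  have "\<forall>n. (int k + frog_pos 0 s n = int j) = (frog_pos 0 s n = int (j - k))" using assms by auto
  then show ?thesis unfolding visits_def by (subst frog_pos_shift) simp
qed

definition Dr :: "(nat \<Rightarrow> bool) \<Rightarrow> enat" where
  "Dr s = (SUP n. enat (nat (frog_pos 0 s n)))"

lemma visits_D: "visits 0 s (int d) \<longleftrightarrow> enat d \<le> Dr s"
proof
  assume "visits 0 s (int d)"
  then obtain n where "frog_pos 0 s n = int d" by (auto simp: visits_def)
  then have "enat d = enat (nat (frog_pos 0 s n))" by simp
  also have "\<dots> \<le> Dr s" unfolding Dr_def by (rule SUP_upper) simp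
  finally show "enat d \<le> Dr s" .
next
  assume a: "enat d \<le> Dr s"
  show "visits 0 s (int d)"
  proof (cases d)
    case 0 then show ?thesis by (auto simp: visits_def intro: exI[of _ 0])
  next
    case (Suc d')
    then have "enat d' < Dr s" using a by (simp add: Suc_ile_eq)
    then obtain n where "enat d' < enat (nat (frog_pos 0 s n))" unfolding Dr_def less_SUP_iff by auto
    then have "int d \<le> frog_pos 0 s n" using Suc by auto
    then show ?thesis using visits_ivt[of 0 s "frog_pos 0 s n" "int d"] by (auto simp: visits_def)
  qed
qed

lemma frog_pos_wsum: "frog_pos 0 s n = wsum (to_stream s) n"
  by (simp add: frog_pos_def wsum_def st_def to_stream_def)

lemma visits_Hit: "visits 0 s (int d) \<longleftrightarrow> Hit (- int d) (to_stream s)"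
  by (auto simp: visits_def Hit_def frog_pos_wsum)

lemma meas_visits[measurable]: "Measurable.pred (Bp p) (\<lambda>s. visits 0 s (int d))"
  unfolding visits_Hit by measurable

context walkp
begin

lemma prob_visits: "measure (Bp p) {s \<in> space (Bp p). visits 0 s (int d)} = q ^ d"
proof -
  have "measure (Bp p) {s \<in> space (Bp p). visits 0 s (int d)} =
        measure (Bp p) (to_stream -` {\<omega> \<in> space (SB p). Hit (- int d) \<omega>} \<inter> space (Bp p))"
    by (rule arg_cong[where f="measure (Bp p)"]) (auto simp: visits_Hit space_stream_space)
  also have "\<dots> = measure (distr (Bp p) (SB p) to_stream) {\<omega> \<in> space (SB p). Hit (- int d) \<omega>}"
    by (rule measure_distr[symmetric]) measurable
  also have "\<dots> = q ^ d" using hit_prob[of d] stream_space_eq_distr by metis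
  finally show ?thesis .
qed

end


lemma Dr_enat_iff: "Dr s = enat d \<longleftrightarrow> visits 0 s (int d) \<and> \<not> visits 0 s (int (Suc d))"
  unfolding visits_D by (cases "Dr s") auto

lemma Dr_inf_iff: "Dr s = \<infinity> \<longleftrightarrow> (\<forall>d. visits 0 s (int d))"
  unfolding visits_D
  apply (cases "Dr s")
   apply auto
  using Suc_n_not_le_n by blast

lemma Dr_pred: "Dr s = v \<longleftrightarrow> (case v of enat d \<Rightarrow> visits 0 s (int d) \<and> \<not> visits 0 s (int (Suc d))
    | \<infinity> \<Rightarrow> (\<forall>d. visits 0 s (int d)))"
  by (cases v) (simp_all add: Dr_enat_iff Dr_inf_iff)

lemma meas_visits2[measurable]: "Measurable.pred (Bp p) (\<lambda>s. visits 0 s (1 + int d))"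
  using meas_visits[where p=p and d="Suc d"] by simp

lemma meas_Dr_eq[measurable]: "Measurable.pred (Bp p) (\<lambda>s. Dr s = v)"
  unfolding Dr_pred by (cases v) simp_all

lemma meas_Dr[measurable]: "Dr \<in> measurable (Bp p) (count_space UNIV)"
proof (subst measurable_count_space_eq_countable)
  show "countable (UNIV :: enat set)" by simp
  show "Dr \<in> space (Bp p) \<rightarrow> UNIV \<and> (\<forall>a\<in>UNIV. Dr -` {a} \<inter> space (Bp p) \<in> sets (Bp p))"
  proof (intro conjI ballI)
    fix a :: enat
    have "Dr -` {a} \<inter> space (Bp p) = {s \<in> space (Bp p). Dr s = a}" by auto
    also have "\<dots> \<in> sets (Bp p)" by measurable
    finally show "Dr -` {a} \<inter> space (Bp p) \<in> sets (Bp p)" .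
  qed simp
qed

context walkp
begin

lemma Bp_prob: "prob_space (Bp p)"
  by (intro prob_space_PiM prob_space_measure_pmf)

lemma D_dist: "measure (Bp p) {s \<in> space (Bp p). Dr s = v} = pmf (geomE q) v"
proof -
  interpret P: prob_space "Bp p" by (rule Bp_prob)
  show ?thesis
  proof (cases v)
    case (enat d)
    have "{s \<in> space (Bp p). Dr s = v} = {s \<in> space (Bp p). visits 0 s (int d)} - {s \<in> space (Bp p). visits 0 s (int (Suc d))}"
      using enat by (auto simp: Dr_enat_iff)
    moreover have "{s \<in> space (Bp p). visits 0 s (int (Suc d))} \<subseteq> {s \<in> space (Bp p). visits 0 s (int d)}"
      using visits_ivt[of 0 _ "int (Suc d)" "int d"] by auto
    moreover have "measure (Bp p) {s \<in> space (Bp p). visits 0 s (int (Suc d))} = q ^ Suc d"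
      by (rule prob_visits)
    ultimately have "measure (Bp p) {s \<in> space (Bp p). Dr s = v} = q ^ d - q ^ Suc d"
      by (simp add: P.finite_measure_Diff prob_visits del: of_nat_Suc)
    also have "\<dots> = pmf (geomE q) v" using enat q_pos q_lt by (simp add: pmf_geomE algebra_simps)
    finally show ?thesis .
  next
    case infinity
    have le: "measure (Bp p) {s \<in> space (Bp p). Dr s = v} \<le> q ^ d" for d
    proof -
      have "measure (Bp p) {s \<in> space (Bp p). Dr s = v} \<le> measure (Bp p) {s \<in> space (Bp p). visits 0 s (int d)}"
        using infinity by (intro P.finite_measure_mono) (auto simp: Dr_inf_iff)
      then show ?thesis by (simp add: prob_visits)
    qed
    have "measure (Bp p) {s \<in> space (Bp p). Dr s = v} \<le> 0"
    proof (rule ccontr)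
      assume "\<not> ?thesis"
      then obtain d where "q ^ d < measure (Bp p) {s \<in> space (Bp p). Dr s = v}"
        using real_arch_pow_inv[of _ q] q_lt by force
      then show False using le[of d] by simp
    qed
    then show ?thesis using infinity by (simp add: pmf_geomE_inf measure_nonneg antisym)
  qed
qed

end


definition Aset :: "(nat \<Rightarrow> nat) \<Rightarrow> (nat \<times> nat \<Rightarrow> nat \<Rightarrow> bool) \<Rightarrow> nat \<Rightarrow> (nat \<times> nat) set" where
  "Aset eta S j = {(k, i). k < j \<and> woken eta S (k, i) \<and> visits k (S (k, i)) (int j)}"

definition Aj where "Aj eta S j = (if j = 0 then {(0, 0)} else Aset eta S j)"

definition res :: "(nat \<times> nat \<Rightarrow> nat \<Rightarrow> bool) \<Rightarrow> nat \<Rightarrow> nat \<times> nat \<Rightarrow> enat" where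
  "res S j x = Dr (S x) - enat (j - fst x)"

definition Lk :: "(nat \<Rightarrow> nat) \<Rightarrow> (nat \<times> nat \<Rightarrow> nat \<Rightarrow> bool) \<Rightarrow> nat \<Rightarrow> enat list" where
  "Lk eta S k = (if k = 0 then [] else map (\<lambda>i. Dr (S (k, i))) [0..<eta k])"

primrec Rs :: "(nat \<Rightarrow> nat) \<Rightarrow> (nat \<times> nat \<Rightarrow> nat \<Rightarrow> bool) \<Rightarrow> nat \<Rightarrow> enat list" where
  "Rs eta S 0 = [Dr (S (0, 0))]"
| "Rs eta S (Suc j) = stepR j (Rs eta S j) (Lk eta S j)"

lemma woken_below:
  assumes "woken eta S x"
  shows "0 < l \<Longrightarrow> l \<le> fst x \<Longrightarrow> \<exists>k' i'. k' < l \<and> woken eta S (k', i') \<and> visits k' (S (k', i')) (int l)"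
  using assms
proof (induction arbitrary: l rule: woken.induct)
  case origin
  then show ?case by simp
next
  case (wake k i l1 i')
  show ?case
  proof (cases "k < l")
    case True
    have "visits k (S (k, i)) (int l)"
      using visits_ivt[OF wake.hyps(2)] True wake.prems by simp
    then show ?thesis using True wake.hyps(1) by blast
  next
    case False
    then show ?thesis using wake.IH[of l] wake.prems by simp
  qed
qed

lemma woken_pos: "0 < k \<Longrightarrow> woken eta S (k, i) \<longleftrightarrow> i < eta k \<and> Aset eta S k \<noteq> {}"
proof
  assume k: "0 < k" and w: "woken eta S (k, i)"
  from woken_below[OF w k] obtain k' i' where "k' < k" "woken eta S (k', i')" "visits k' (S (k', i')) (int k)"
    by auto
  then have "Aset eta S k \<noteq> {}" by (auto simp: Aset_def)
  moreover have "i < eta k" using w k by (cases rule: woken.cases) auto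
  ultimately show "i < eta k \<and> Aset eta S k \<noteq> {}" by simp
next
  assume k: "0 < k" and a: "i < eta k \<and> Aset eta S k \<noteq> {}"
  then obtain x where x: "x \<in> Aset eta S k" by blast
  obtain k' i' where ki: "x = (k', i')" by force
  have "woken eta S (k', i')" "visits k' (S (k', i')) (int k)"
    using x unfolding ki Aset_def by simp_all
  then show "woken eta S (k, i)" using k a woken.wake[where eta=eta and S=S and k=k' and i=i' and l=k and i'=i] by blast
qed

lemma woken_zero: "woken eta S (0, i) \<longleftrightarrow> i = 0"
  by (auto elim: woken.cases intro: woken.origin)

lemma visits_res:
  assumes "fst x \<le> j"
  shows "visits (fst x) (S x) (int (Suc j)) \<longleftrightarrow> 1 \<le> res S j x"
proof -
  obtain t where t: "j - fst x = t" "Suc j - fst x = Suc t" using assms by auto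
  have "visits (fst x) (S x) (int (Suc j)) \<longleftrightarrow> enat (Suc t) \<le> Dr (S x)"
    using assms t by (simp add: visits_shift visits_D del: of_nat_Suc)
  also have "\<dots> \<longleftrightarrow> 1 \<le> Dr (S x) - enat t"
    by (cases "Dr (S x)") (auto simp: one_enat_def)
  finally show ?thesis unfolding res_def t .
qed

lemma res_Suc: "fst x \<le> j \<Longrightarrow> res S (Suc j) x = res S j x - 1"
  unfolding res_def by (cases "Dr (S x)") (auto simp: one_enat_def Suc_diff_le)

lemma filt_map: "filt (map g xs) = map (\<lambda>x. g x - 1) (filter (\<lambda>x. 1 \<le> g x) xs)"
  by (simp add: filt_def filter_map o_def)

lemma Aj_fst: "x \<in> Aj eta S j \<Longrightarrow> fst x \<le> j"
  by (auto simp: Aj_def Aset_def split: if_splits)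

lemma Aj_fst_lt: "x \<in> Aj eta S j \<Longrightarrow> 0 < j \<Longrightarrow> fst x < j"
  by (auto simp: Aj_def Aset_def split: if_splits)

lemma Aj_Suc: "Aj eta S (Suc j) = {x \<in> Aj eta S j. visits (fst x) (S x) (int (Suc j))} \<union>
   (if 0 < j \<and> Aj eta S j \<noteq> {} then (\<lambda>i. (j, i)) ` {i. i < eta j \<and> visits j (S (j, i)) (int (Suc j))} else {})"
proof (cases "j = 0")
  case True
  then show ?thesis by (auto simp: Aj_def Aset_def woken_zero intro: woken.origin)
next
  case False
  show ?thesis
  proof (intro set_eqI iffI)
    fix x assume x: "x \<in> Aj eta S (Suc j)"
    obtain k i where ki: "x = (k, i)" by force
    from x have k: "k < Suc j" "woken eta S (k, i)" "visits k (S (k, i)) (int (Suc j))"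
      by (auto simp: Aj_def Aset_def ki)
    show "x \<in> {x \<in> Aj eta S j. visits (fst x) (S x) (int (Suc j))} \<union>
   (if 0 < j \<and> Aj eta S j \<noteq> {} then (\<lambda>i. (j, i)) ` {i. i < eta j \<and> visits j (S (j, i)) (int (Suc j))} else {})"
    proof (cases "k < j")
      case True
      then have "visits k (S (k, i)) (int j)" using visits_ivt[OF k(3)] by simp
      then show ?thesis using True k False by (auto simp: Aj_def Aset_def ki)
    next
      case kj: False
      then have "k = j" using k by simp
      then have "i < eta j \<and> Aset eta S j \<noteq> {}" using woken_pos[of j eta S i] k False by simp
      then show ?thesis using False k \<open>k = j\<close> by (auto simp: Aj_def ki)
    qed
  next
    fix x assume x: "x \<in> {x \<in> Aj eta S j. visits (fst x) (S x) (int (Suc j))} \<union>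
   (if 0 < j \<and> Aj eta S j \<noteq> {} then (\<lambda>i. (j, i)) ` {i. i < eta j \<and> visits j (S (j, i)) (int (Suc j))} else {})"
    then show "x \<in> Aj eta S (Suc j)"
    proof
      assume "x \<in> {x \<in> Aj eta S j. visits (fst x) (S x) (int (Suc j))}"
      then show ?thesis using False by (auto simp: Aj_def Aset_def)
    next
      assume "x \<in> (if 0 < j \<and> Aj eta S j \<noteq> {} then (\<lambda>i. (j, i)) ` {i. i < eta j \<and> visits j (S (j, i)) (int (Suc j))} else {})"
      then obtain i where i: "x = (j, i)" "i < eta j" "visits j (S (j, i)) (int (Suc j))" "Aset eta S j \<noteq> {}"
        using False by (auto simp: Aj_def split: if_splits)
      then have "woken eta S (j, i)" using woken_pos[of j eta S i] False by simp
      then show ?thesis using i by (auto simp: Aj_def Aset_def)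
    qed
  qed
qed

lemma Rs_inv: "\<exists>xs. distinct xs \<and> set xs = Aj eta S j \<and> Rs eta S j = map (res S j) xs"
proof (induction j)
  case 0
  show ?case by (intro exI[of _ "[(0,0)]"]) (simp add: Aj_def res_def)
next
  case (Suc j)
  then obtain xs where xs: "distinct xs" "set xs = Aj eta S j" "Rs eta S j = map (res S j) xs" by blast
  define P where "P x = visits (fst x) (S x) (int (Suc j))" for x
  define loc where "loc = (if 0 < j \<and> Aj eta S j \<noteq> {} then filter P (map (\<lambda>i. (j, i)) [0..<eta j]) else [])"
  have fx: "fst x \<le> j" if "x \<in> set xs" for x using Aj_fst that xs(2) by blast
  have Pr: "\<And>x. fst x \<le> j \<Longrightarrow> P x = (1 \<le> res S j x)" unfolding P_def by (rule visits_res)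
  have fl: "filt (map (res S j) ys) = map (res S (Suc j)) (filter P ys)" if "\<forall>x\<in>set ys. fst x \<le> j" for ys
  proof -
    have "filter (\<lambda>x. 1 \<le> res S j x) ys = filter P ys" using that Pr by (intro filter_cong) auto
    moreover have "map (\<lambda>x. res S j x - 1) (filter P ys) = map (res S (Suc j)) (filter P ys)"
      using that res_Suc by (intro map_cong) auto
    ultimately show ?thesis unfolding filt_map by simp
  qed
  have filtR: "filt (Rs eta S j) = map (res S (Suc j)) (filter P xs)"
    unfolding xs(3) using fx by (intro fl) auto
  have filtL: "(if 0 < j \<and> Rs eta S j \<noteq> [] then filt (Lk eta S j) else []) = map (res S (Suc j)) loc"
  proof (cases "0 < j \<and> Aj eta S j \<noteq> {}")
    case True
    then have "Rs eta S j \<noteq> []" using xs by auto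
    moreover have "filt (Lk eta S j) = map (res S (Suc j)) (filter P (map (\<lambda>i. (j, i)) [0..<eta j]))"
    proof -
      have "Lk eta S j = map (\<lambda>x. Dr (S x)) (map (\<lambda>i. (j, i)) [0..<eta j])"
        using True by (simp add: Lk_def)
      also have "\<dots> = map (res S j) (map (\<lambda>i. (j, i)) [0..<eta j])"
        by (simp add: res_def)
      finally show ?thesis using fl[of "map (\<lambda>i. (j, i)) [0..<eta j]"] by simp
    qed
    ultimately show ?thesis using True by (simp add: loc_def)
  next
    case False
    then have "\<not> (0 < j \<and> Rs eta S j \<noteq> [])" using xs by auto
    then show ?thesis using False unfolding loc_def by (simp only: if_False list.map(1))
  qed
  have "Rs eta S (Suc j) = map (res S (Suc j)) (filter P xs @ loc)"
    using filtR filtL by (simp add: stepR_def)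
  moreover have "set (filter P xs @ loc) = Aj eta S (Suc j)"
  proof -
    have s1: "set (filter P xs) = {x \<in> Aj eta S j. visits (fst x) (S x) (int (Suc j))}"
      using xs(2) by (auto simp: P_def)
    have s2: "set loc = (if 0 < j \<and> Aj eta S j \<noteq> {} then (\<lambda>i. (j, i)) ` {i. i < eta j \<and> visits j (S (j, i)) (int (Suc j))} else {})"
      unfolding loc_def P_def by (cases "0 < j \<and> Aj eta S j \<noteq> {}") auto
    show ?thesis unfolding set_append s1 s2 Aj_Suc ..
  qed
  moreover have "distinct (filter P xs @ loc)"
  proof -
    have "distinct (map (\<lambda>i. (j, i)) [0..<eta j])" by (simp add: distinct_map inj_on_def)
    then have "distinct loc" unfolding loc_def by simp
    moreover have "x \<notin> set loc" if "x \<in> set xs" for x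
    proof
      assume "x \<in> set loc"
      then have "0 < j" "Aj eta S j \<noteq> {}" "fst x = j" unfolding loc_def by (auto split: if_splits)
      moreover have "fst x < j" using Aj_fst_lt[of x eta S j] xs(2) that \<open>0 < j\<close> by simp
      ultimately show False by simp
    qed
    ultimately show ?thesis using xs(1) by auto
  qed
  ultimately show ?case by blast
qed

lemma frog_M_Rs: "frog_M (eta, S) j = length (Rs eta S j)"
proof -
  obtain xs where xs: "distinct xs" "set xs = Aj eta S j" "Rs eta S j = map (res S j) xs"
    using Rs_inv by blast
  show ?thesis
  proof (cases "j = 0")
    case True then show ?thesis by (simp add: frog_M_def)
  next
    case False
    then have "card (Aset eta S j) = length xs" using xs distinct_card[of xs] by (simp add: Aj_def)
    then show ?thesis using False xs by (simp add: frog_M_def Aset_def)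
  qed
qed


lemma pmf_map_Cons: "pmf (map_pmf (Cons x) M) (a # l) = (if x = a then pmf M l else 0)"
proof (cases "x = a")
  case True then show ?thesis by (simp add: pmf_map_inj')
next
  case False
  then have "Cons x -` {a # l} = {}" by auto
  then show ?thesis using False by (simp add: pmf_map)
qed

lemma pmf_replicate: "pmf (replicate_pmf e g) l = (if length l = e then \<Prod>i<e. pmf g (l ! i) else 0)"
proof (induction e arbitrary: l)
  case 0
  then show ?case by (simp add: indicator_def)
next
  case (Suc e)
  show ?case
  proof (cases l)
    case Nil
    have "pmf (replicate_pmf (Suc e) g) [] = 0"
      by (simp add: pmf_eq_0_set_pmf set_replicate_pmf)
    then show ?thesis using Nil by simp
  next
    case (Cons a l')
    have "pmf (replicate_pmf (Suc e) g) l = (\<integral>x. indicator {a} x * pmf (replicate_pmf e g) l' \<partial>measure_pmf g)"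
      unfolding rep_Suc Cons pmf_bind pmf_map_Cons by (intro Bochner_Integration.integral_cong) (auto simp: indicator_def)
    also have "\<dots> = pmf g a * pmf (replicate_pmf e g) l'"
      by (simp add: measure_pmf_single)
    also have "\<dots> = (if length l = Suc e then \<Prod>i<Suc e. pmf g (l ! i) else 0)"
      using Suc[of l'] Cons by (simp add: prod.lessThan_Suc_shift del: prod.lessThan_Suc)
    finally show ?thesis .
  qed
qed

lemma pmf_locfull: "pmf (locfull p f k) l = (if k = 0 then (if l = [] then 1 else 0) else
   pmf (poiss (f k)) (length l) * (\<Prod>i<length l. pmf (geomE (qq p)) (l ! i)))"
proof (cases "k = 0")
  case True then show ?thesis by (simp add: locfull_def indicator_def)
next
  case False
  have "pmf (locfull p f k) l = (\<integral>e. indicator {length l} e * (\<Prod>i<length l. pmf (geomE (qq p)) (l ! i)) \<partial>measure_pmf (poiss (f k)))"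
    using False unfolding locfull_def if_not_P[OF False] pmf_bind pmf_replicate
    by (intro Bochner_Integration.integral_cong) (auto simp: indicator_def)
  also have "\<dots> = pmf (poiss (f k)) (length l) * (\<Prod>i<length l. pmf (geomE (qq p)) (l ! i))"
    by (simp add: measure_pmf_single)
  finally show ?thesis using False by simp
qed

lemma pmf_locsfrom: "pmf (locsfrom p f j n) ls = (if length ls = n then \<Prod>i<n. pmf (locfull p f (j + i)) (ls ! i) else 0)"
proof (induction n arbitrary: j ls)
  case 0
  then show ?case by (simp add: indicator_def)
next
  case (Suc n)
  show ?case
  proof (cases ls)
    case Nil
    have "pmf (locsfrom p f j (Suc n)) [] = 0"
      by (auto simp: pmf_eq_0_set_pmf)
    then show ?thesis using Nil by simp
  next
    case (Cons L ls')
    have inj: "inj (\<lambda>(L, ls). L # ls)" by (auto simp: inj_def)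
    have "pmf (locsfrom p f j (Suc n)) ls = pmf (pair_pmf (locfull p f j) (locsfrom p f (Suc j) n)) (L, ls')"
      unfolding Cons locsfrom.simps using pmf_map_inj'[OF inj, of _ "(L, ls')"] by simp
    also have "\<dots> = pmf (locfull p f j) L * pmf (locsfrom p f (Suc j) n) ls'"
      by (rule pmf_pair)
    also have "\<dots> = (if length ls = Suc n then \<Prod>i<Suc n. pmf (locfull p f (j + i)) (ls ! i) else 0)"
      using Suc[of "Suc j" ls'] Cons by (simp add: prod.lessThan_Suc_shift del: prod.lessThan_Suc)
    finally show ?thesis .
  qed
qed


definition Yv :: "nat \<Rightarrow> (nat \<Rightarrow> nat) \<times> (nat \<times> nat \<Rightarrow> nat \<Rightarrow> bool) \<Rightarrow> enat \<times> enat list list" where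
  "Yv n \<omega> = (Dr (snd \<omega> (0, 0)), map (Lk (fst \<omega>) (snd \<omega>)) [0..<n])"

lemma map_upt_eq_iff: "map g [0..<n] = l \<longleftrightarrow> length l = n \<and> (\<forall>k<n. g k = l ! k)"
  by (auto simp: list_eq_iff_nth_eq)

lemma Lk_eq_iff: "Lk eta S k = l \<longleftrightarrow> (if k = 0 then l = [] else
    eta k = length l \<and> (\<forall>i<length l. Dr (S (k, i)) = l ! i))"
  unfolding Lk_def by (auto simp: map_upt_eq_iff)

lemma Yv_eq: "Yv n (eta, S) = (d, ls) \<longleftrightarrow> (length ls = n \<and> (0 < n \<longrightarrow> ls ! 0 = [])) \<and>
   ((\<forall>k\<in>{1..<n}. eta k = length (ls ! k)) \<and>
    (Dr (S (0, 0)) = d \<and> (\<forall>k\<in>{1..<n}. \<forall>i<length (ls ! k). Dr (S (k, i)) = ls ! k ! i)))"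
proof -
  have "Yv n (eta, S) = (d, ls) \<longleftrightarrow> Dr (S (0, 0)) = d \<and> length ls = n \<and> (\<forall>k<n. Lk eta S k = ls ! k)"
    by (simp add: Yv_def map_upt_eq_iff)
  also have "(\<forall>k<n. Lk eta S k = ls ! k) \<longleftrightarrow> (0 < n \<longrightarrow> ls ! 0 = []) \<and>
      (\<forall>k\<in>{1..<n}. eta k = length (ls ! k) \<and> (\<forall>i<length (ls ! k). Dr (S (k, i)) = ls ! k ! i))"
    unfolding Lk_eq_iff by (auto simp: Ball_def)
  finally show ?thesis by auto
qed


abbreviation ME :: "(nat \<Rightarrow> real) \<Rightarrow> nat \<Rightarrow> nat measure" where
  "ME f \<equiv> (\<lambda>j. measure_pmf (poiss (if j = 0 then 0 else f j)))"

definition Ay :: "(nat \<Rightarrow> real) \<Rightarrow> nat \<Rightarrow> enat list list \<Rightarrow> (nat \<Rightarrow> nat) set" where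
  "Ay f n ls = prod_emb UNIV (ME f) {1..<n} (\<Pi>\<^sub>E k\<in>{1..<n}. {length (ls ! k)})"

definition Jset :: "nat \<Rightarrow> enat list list \<Rightarrow> (nat \<times> nat) set" where
  "Jset n ls = insert (0, 0) (Sigma {1..<n} (\<lambda>k. {..<length (ls ! k)}))"

definition vl :: "enat \<Rightarrow> enat list list \<Rightarrow> nat \<times> nat \<Rightarrow> enat" where
  "vl d ls x = (if x = (0, 0) then d else ls ! fst x ! snd x)"

definition By :: "real \<Rightarrow> nat \<Rightarrow> enat \<Rightarrow> enat list list \<Rightarrow> (nat \<times> nat \<Rightarrow> nat \<Rightarrow> bool) set" where
  "By p n d ls = prod_emb UNIV (\<lambda>_. Bp p) (Jset n ls) (\<Pi>\<^sub>E x\<in>Jset n ls. {s \<in> space (Bp p). Dr s = vl d ls x})"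

lemma finite_Jset: "finite (Jset n ls)" by (simp add: Jset_def)

lemma Ay_iff: "eta \<in> Ay f n ls \<longleftrightarrow> (\<forall>k\<in>{1..<n}. eta k = length (ls ! k))"
  by (auto simp: Ay_def prod_emb_iff)

lemma By_iff: "S \<in> By p n d ls \<longleftrightarrow> S \<in> space (PiM UNIV (\<lambda>_::nat\<times>nat. Bp p)) \<and>
   Dr (S (0, 0)) = d \<and> (\<forall>k\<in>{1..<n}. \<forall>i<length (ls ! k). Dr (S (k, i)) = ls ! k ! i)"
  by (auto simp: By_def prod_emb_iff space_PiM Jset_def vl_def PiE_iff)

lemma space_frog: "space (frog_space p f) = space (PiM UNIV (ME f)) \<times> space (PiM UNIV (\<lambda>_::nat\<times>nat. Bp p))"
  by (simp add: frog_space_def space_pair_measure)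

lemma Yv_pre: "{\<omega> \<in> space (frog_space p f). Yv n \<omega> = (d, ls)} =
   (if length ls = n \<and> (0 < n \<longrightarrow> ls ! 0 = []) then Ay f n ls \<times> By p n d ls else {})"
  unfolding space_frog by (auto simp: Yv_eq Ay_iff By_iff space_PiM)


lemma Ay_sets: "Ay f n ls \<in> sets (PiM UNIV (ME f))"
  unfolding Ay_def by (rule sets_PiM_I) auto

lemma emeasure_Ay: "emeasure (PiM UNIV (ME f)) (Ay f n ls) = (\<Prod>k\<in>{1..<n}. ennreal (pmf (poiss (f k)) (length (ls ! k))))"
proof -
  have "emeasure (PiM UNIV (ME f)) (Ay f n ls) = (\<Prod>k\<in>{1..<n}. emeasure (ME f k) {length (ls ! k)})"
    unfolding Ay_def by (rule emeasure_PiM_emb) (auto simp: prob_space_measure_pmf)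
  also have "\<dots> = (\<Prod>k\<in>{1..<n}. ennreal (pmf (poiss (f k)) (length (ls ! k))))"
    by (intro prod.cong) (auto simp: emeasure_pmf_single)
  finally show ?thesis .
qed

context walkp
begin

lemma q_eq: "q = qq p" by (simp add: q_def qq_def)

lemma By_sets: "By p n d ls \<in> sets (PiM UNIV (\<lambda>_::nat\<times>nat. Bp p))"
  unfolding By_def by (rule sets_PiM_I) (auto simp: finite_Jset)

lemma emeasure_By: "emeasure (PiM UNIV (\<lambda>_::nat\<times>nat. Bp p)) (By p n d ls) = (\<Prod>x\<in>Jset n ls. ennreal (pmf (geomE q) (vl d ls x)))"
proof -
  interpret B: prob_space "Bp p" by (rule Bp_prob)
  have "emeasure (PiM UNIV (\<lambda>_::nat\<times>nat. Bp p)) (By p n d ls) =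
      (\<Prod>x\<in>Jset n ls. emeasure (Bp p) {s \<in> space (Bp p). Dr s = vl d ls x})"
    unfolding By_def by (rule emeasure_PiM_emb) (auto simp: Bp_prob finite_Jset)
  also have "\<dots> = (\<Prod>x\<in>Jset n ls. ennreal (pmf (geomE q) (vl d ls x)))"
    by (intro prod.cong refl) (simp add: B.emeasure_eq_measure D_dist)
  finally show ?thesis .
qed

end


lemma prod_identity:
  assumes v: "length ls = n" "0 < n \<longrightarrow> ls ! 0 = []"
  shows "(\<Prod>k\<in>{1..<n}. pmf (poiss (f k)) (length (ls ! k))) * (\<Prod>x\<in>Jset n ls. pmf (geomE (qq p)) (vl d ls x))
       = pmf (geomE (qq p)) d * (\<Prod>i<n. pmf (locfull p f i) (ls ! i))"
proof -
  define G where "G = pmf (geomE (qq p))"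
  define P where "P k = pmf (poiss (f k)) (length (ls ! k))" for k
  define Sg where "Sg = Sigma {1..<n} (\<lambda>k. {..<length (ls ! k)})"
  have J1: "(\<Prod>x\<in>Jset n ls. G (vl d ls x)) = G d * (\<Prod>x\<in>Sg. G (ls ! fst x ! snd x))"
  proof -
    have "(0, 0) \<notin> Sg" by (auto simp: Sg_def)
    moreover have "finite Sg" by (simp add: Sg_def)
    ultimately have "(\<Prod>x\<in>Jset n ls. G (vl d ls x)) = G (vl d ls (0,0)) * (\<Prod>x\<in>Sg. G (vl d ls x))"
      unfolding Jset_def Sg_def[symmetric] by simp
    also have "(\<Prod>x\<in>Sg. G (vl d ls x)) = (\<Prod>x\<in>Sg. G (ls ! fst x ! snd x))"
      by (intro prod.cong refl) (auto simp: vl_def Sg_def)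
    finally show ?thesis by (simp add: vl_def)
  qed
  have J2: "(\<Prod>x\<in>Sg. G (ls ! fst x ! snd x)) = (\<Prod>k\<in>{1..<n}. \<Prod>t<length (ls ! k). G (ls ! k ! t))"
    unfolding Sg_def by (subst prod.Sigma) (auto simp: case_prod_beta)
  have L: "(\<Prod>i<n. pmf (locfull p f i) (ls ! i)) = (\<Prod>k\<in>{1..<n}. P k * (\<Prod>t<length (ls ! k). G (ls ! k ! t)))"
  proof (cases "n = 0")
    case True then show ?thesis by simp
  next
    case False
    then have "{..<n} = insert 0 {1..<n}" by auto
    then have "(\<Prod>i<n. pmf (locfull p f i) (ls ! i)) = pmf (locfull p f 0) (ls ! 0) * (\<Prod>i\<in>{1..<n}. pmf (locfull p f i) (ls ! i))"
      by simp
    also have "pmf (locfull p f 0) (ls ! 0) = 1" using v False by (simp add: pmf_locfull)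
    also have "(\<Prod>i\<in>{1..<n}. pmf (locfull p f i) (ls ! i)) = (\<Prod>k\<in>{1..<n}. P k * (\<Prod>t<length (ls ! k). G (ls ! k ! t)))"
      by (intro prod.cong refl) (auto simp: pmf_locfull P_def G_def)
    finally show ?thesis by simp
  qed
  show ?thesis
    unfolding G_def[symmetric] P_def[symmetric] J1 J2 L prod.distrib by (simp add: ac_simps)
qed

lemma pmf_Q_invalid:
  assumes "\<not> (length ls = n \<and> (0 < n \<longrightarrow> ls ! 0 = []))"
  shows "pmf (pair_pmf (geomE (qq p)) (locsfrom p f 0 n)) (d, ls) = 0"
proof -
  have "pmf (locsfrom p f 0 n) ls = 0"
  proof (cases "length ls = n")
    case True
    then have "0 < n" "ls ! 0 \<noteq> []" using assms by auto
    then have "\<exists>i\<in>{..<n}. pmf (locfull p f (0 + i)) (ls ! i) = 0" by (auto simp: pmf_locfull intro!: bexI[of _ 0])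
    then show ?thesis using True by (simp add: pmf_locsfrom)
  qed (simp add: pmf_locsfrom)
  then show ?thesis by (simp add: pmf_pair)
qed


context walkp
begin

abbreviation QQ :: "(nat \<Rightarrow> real) \<Rightarrow> nat \<Rightarrow> (enat \<times> enat list list) pmf" where
  "QQ f n \<equiv> pair_pmf (geomE (qq p)) (locsfrom p f 0 n)"

lemma E_prob: "prob_space (PiM UNIV (ME f))"
  by (intro prob_space_PiM prob_space_measure_pmf)

lemma W_prob: "prob_space (PiM UNIV (\<lambda>_::nat\<times>nat. Bp p))"
  by (intro prob_space_PiM Bp_prob)

lemma FS_prob: "prob_space (frog_space p f)"
  unfolding frog_space_def by (intro prob_space_pair E_prob W_prob)

lemma Yv_pre_sets: "{\<omega> \<in> space (frog_space p f). Yv n \<omega> = y} \<in> sets (frog_space p f)"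
proof -
  obtain d ls where y: "y = (d, ls)" by force
  show ?thesis unfolding y Yv_pre unfolding frog_space_def
    using Ay_sets By_sets by (auto intro: pair_measureI)
qed

lemma emeasure_Yv: "emeasure (frog_space p f) {\<omega> \<in> space (frog_space p f). Yv n \<omega> = y} = ennreal (pmf (QQ f n) y)"
proof -
  obtain d ls where y: "y = (d, ls)" by force
  show ?thesis
  proof (cases "length ls = n \<and> (0 < n \<longrightarrow> ls ! 0 = [])")
    case True
    interpret W: prob_space "PiM UNIV (\<lambda>_::nat\<times>nat. Bp p)" by (rule W_prob)
    have "emeasure (frog_space p f) {\<omega> \<in> space (frog_space p f). Yv n \<omega> = y} =
        emeasure (PiM UNIV (ME f)) (Ay f n ls) * emeasure (PiM UNIV (\<lambda>_::nat\<times>nat. Bp p)) (By p n d ls)"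
      unfolding y Yv_pre if_P[OF True] unfolding frog_space_def
      by (rule W.emeasure_pair_measure_Times[OF Ay_sets By_sets])
    also have "\<dots> = ennreal ((\<Prod>k\<in>{1..<n}. pmf (poiss (f k)) (length (ls ! k))) *
                       (\<Prod>x\<in>Jset n ls. pmf (geomE (qq p)) (vl d ls x)))"
      unfolding emeasure_Ay emeasure_By q_eq
      by (simp add: prod_ennreal ennreal_mult prod_nonneg)
    also have "\<dots> = ennreal (pmf (QQ f n) y)"
      unfolding prod_identity[OF conjunct1[OF True] conjunct2[OF True]] y pmf_pair
      using True by (simp add: pmf_locsfrom)
    finally show ?thesis .
  next
    case False
    then show ?thesis unfolding y Yv_pre if_not_P[OF False] using pmf_Q_invalid[OF False] by simp
  qed
qed

lemma Yv_meas: "Yv n \<in> measurable (frog_space p f) (count_space UNIV)"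
proof (subst measurable_count_space_eq_countable)
  show "countable (UNIV :: (enat \<times> enat list list) set)" by simp
  show "Yv n \<in> space (frog_space p f) \<rightarrow> UNIV \<and>
    (\<forall>a\<in>UNIV. Yv n -` {a} \<inter> space (frog_space p f) \<in> sets (frog_space p f))"
  proof (intro conjI ballI)
    fix a
    have "Yv n -` {a} \<inter> space (frog_space p f) = {\<omega> \<in> space (frog_space p f). Yv n \<omega> = a}" by auto
    then show "Yv n -` {a} \<inter> space (frog_space p f) \<in> sets (frog_space p f)" using Yv_pre_sets by simp
  qed simp
qed

lemma Yv_distr: "distr (frog_space p f) (count_space UNIV) (Yv n) = measure_pmf (QQ f n)"
proof (rule measure_eqI_countable[where A=UNIV])
  fix a :: "enat \<times> enat list list"
  have "emeasure (distr (frog_space p f) (count_space UNIV) (Yv n)) {a} =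
      emeasure (frog_space p f) (Yv n -` {a} \<inter> space (frog_space p f))"
    by (rule emeasure_distr[OF Yv_meas]) simp
  also have "Yv n -` {a} \<inter> space (frog_space p f) = {\<omega> \<in> space (frog_space p f). Yv n \<omega> = a}" by auto
  also have "emeasure (frog_space p f) \<dots> = ennreal (pmf (QQ f n) a)" by (rule emeasure_Yv)
  finally show "emeasure (distr (frog_space p f) (count_space UNIV) (Yv n)) {a} = emeasure (measure_pmf (QQ f n)) {a}"
    by (simp add: emeasure_pmf_single)
qed simp_all

end


lemma lens_Rs: "lens j (Rs eta S j) (map (Lk eta S) [j..<j+n]) = map (\<lambda>i. length (Rs eta S i)) [j..<Suc (j+n)]"
proof (induction n arbitrary: j)
  case 0
  then show ?case by simp
next
  case (Suc n)
  have "[j..<j + Suc n] = j # [Suc j..<Suc j + n]" by (simp add: upt_rec)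
  moreover have "[j..<Suc (j + Suc n)] = j # [Suc j..<Suc (Suc j + n)]" by (simp add: upt_rec)
  ultimately show ?case using Suc[of "Suc j"] by simp
qed

context walkp
begin

lemma map_QQ: assumes f: "\<forall>j>0. 0 \<le> f j"
  shows "map_pmf (\<lambda>y. lens 0 [fst y] (snd y)) (QQ f n) = chainpmf p f 0 1 n"
proof -
  have "map_pmf (\<lambda>y. lens 0 [fst y] (snd y)) (QQ f n) =
      bind_pmf (geomE (qq p)) (\<lambda>d. map_pmf (lens 0 [d]) (locsfrom p f 0 n))"
    by (simp add: pair_pmf_def map_bind_pmf map_pmf_def bind_assoc_pmf bind_return_pmf)
  also have "\<dots> = bind_pmf (replicate_pmf 1 (geomE (qq p))) (\<lambda>R. map_pmf (lens 0 R) (locsfrom p f 0 n))"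
    by (subst replicate_pmf_1) (simp add: bind_map_pmf)
  also have "\<dots> = chainpmf p f 0 1 n"
    by (rule chain_lemma[OF p_gt p_lt f]) simp
  finally show ?thesis .
qed

lemma markov: assumes f: "\<forall>j>0. 0 \<le> f j"
  shows "markov_chain_nat (frog_space p f) frog_M (return_pmf 1) (frog_kernel p f)"
  unfolding markov_chain_nat_def
proof (intro allI conjI)
  fix n and m :: "nat \<Rightarrow> nat"
  define G where "G y = lens 0 [fst y] (snd y)" for y :: "enat \<times> enat list list"
  define B where "B = G -` {map m [0..<Suc n]}"
  have set_eq: "{\<omega> \<in> space (frog_space p f). \<forall>i\<le>n. frog_M \<omega> i = m i} = Yv n -` B \<inter> space (frog_space p f)"
  proof (intro set_eqI)
    fix \<omega> :: "(nat \<Rightarrow> nat) \<times> (nat \<times> nat \<Rightarrow> nat \<Rightarrow> bool)"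
    obtain eta S where w: "\<omega> = (eta, S)" by force
    have "G (Yv n \<omega>) = map (\<lambda>i. frog_M \<omega> i) [0..<Suc n]"
      using lens_Rs[of 0 eta S n] unfolding w by (simp add: G_def Yv_def frog_M_Rs)
    then have "Yv n \<omega> \<in> B \<longleftrightarrow> (\<forall>i\<le>n. frog_M \<omega> i = m i)"
      unfolding B_def by (auto simp: map_eq_conv less_Suc_eq_le)
    then show "\<omega> \<in> {\<omega> \<in> space (frog_space p f). \<forall>i\<le>n. frog_M \<omega> i = m i} \<longleftrightarrow> \<omega> \<in> Yv n -` B \<inter> space (frog_space p f)"
      by auto
  qed
  show "{\<omega> \<in> space (frog_space p f). \<forall>i\<le>n. frog_M \<omega> i = m i} \<in> sets (frog_space p f)"
    unfolding set_eq by (rule measurable_sets[OF Yv_meas]) simp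
  have "measure (frog_space p f) {\<omega> \<in> space (frog_space p f). \<forall>i\<le>n. frog_M \<omega> i = m i}
      = measure (distr (frog_space p f) (count_space UNIV) (Yv n)) B"
    unfolding set_eq by (rule measure_distr[symmetric, OF Yv_meas]) simp
  also have "\<dots> = measure (measure_pmf (QQ f n)) B" unfolding Yv_distr ..
  also have "\<dots> = pmf (map_pmf G (QQ f n)) (map m [0..<Suc n])"
    unfolding B_def by (simp add: pmf_map)
  also have "map_pmf G (QQ f n) = chainpmf p f 0 1 n" unfolding G_def by (rule map_QQ[OF f])
  also have "pmf (chainpmf p f 0 1 n) (map m [0..<Suc n]) =
     pmf (return_pmf 1) (m 0) * (\<Prod>i<n. pmf (frog_kernel p f i (m i)) (m (Suc i)))"
    unfolding pmf_chainpmf by (simp add: indicator_def)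
  finally show "measure (frog_space p f) {\<omega> \<in> space (frog_space p f). \<forall>i\<le>n. frog_M \<omega> i = m i} =
     pmf (return_pmf 1) (m 0) * (\<Prod>i<n. pmf (frog_kernel p f i (m i)) (m (Suc i)))" .
qed

end

theorem proposition5:
  fixes p :: real and f :: "nat \<Rightarrow> real"
  assumes "1 / 2 < p" and "p < 1"
    and "\<forall>j>0. 0 \<le> f j"
  shows "prob_space (frog_space p f)
    \<and> markov_chain_nat (frog_space p f) frog_M (return_pmf 1) (frog_kernel p f)"
proof -
  interpret walkp p using assms by unfold_locales auto
  show ?thesis using FS_prob markov assms(3) by blast
qed


end
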